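(* Let $N\ge1$, $1\le S\le N$, $L$ a band-width vector, $\dot W$ an $L$-admissible matrix, $W_\varepsilon=\mathrm{Id}+\varepsilon\dot W$, $\beta\in\Gamma$ and $k\in\mathbb Z$. Then there exists $\gamma_k>0$ such that for every $0<\varepsilon<\gamma_k$ the matrix $P_{\varepsilon,\beta}:=D_{k,\beta,L}W_\varepsilon$ has $N$ distinct eigenvalues.
   Context: A band-width vector is $L=(L_1,\dots,L_S)$ of positive integers with $\sum_sL_s=N$; $N_0=0$, $N_s=N_{s-1}+L_s$, $B_s=\{j:N_{s-1}<j\le N_s\}$. For $\beta\in\mathbb R^S$, $D_{k,\beta,L}$ is the $N\times N$ diagonal matrix whose $j$-th diagonal entry is $e^{-2\pi ik\beta_s}$ for $j\in B_s$. $\dot W$ is $L$-admissible if it is real symmetric and (1) $\dot W_{ij}\ge0$ for $i\ne j$, $\sum_j\dot W_{ij}=0$ for all $i$; (2) $\dot W$ has $N$ distinct eigenvalues; (3) for each $s$, $\hat W_s=(\dot W_{jk})_{j,k\in B_s}$ has $L_s$ distinct eigenvalues. $\Gamma=\{\beta\in\mathbb R^S: e^{-2\pi ik\beta_{s_1}}\neq e^{-2\pi ik\beta_{s_2}}\text{ for all }k\in\mathbb Z\setminus\{0\}\text{ and all }s_1\neq s_2\}$. *)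

theory Defs
  imports "HOL-Analysis.Analysis" "Jordan_Normal_Form.Char_Poly"
begin

text \<open>Band-width vector L = (L_1,...,L_S) as a list (0-based block index s < S = length L).
  N_s = sum of the first s entries (so block s is {N_s ..< N_s + L!s}, 0-based).\<close>

definition bw_vector :: "nat list \<Rightarrow> nat \<Rightarrow> bool" where
  "bw_vector L N \<longleftrightarrow> (\<forall>s<length L. L ! s > 0) \<and> sum_list L = N"

definition bw_start :: "nat list \<Rightarrow> nat \<Rightarrow> nat" where
  "bw_start L s = sum_list (take s L)"

definition bw_block :: "nat list \<Rightarrow> nat \<Rightarrow> nat set" where
  "bw_block L s = {bw_start L s ..< bw_start L s + L ! s}"

definition block_of :: "nat list \<Rightarrow> nat \<Rightarrow> nat" where
  "block_of L j = (THE s. s < length L \<and> j \<in> bw_block L s)"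

definition D_mat :: "int \<Rightarrow> (nat \<Rightarrow> real) \<Rightarrow> nat list \<Rightarrow> complex mat" where
  "D_mat k \<beta> L = mat (sum_list L) (sum_list L) (\<lambda>(i,j).
      if i = j then exp (- 2 * pi * \<i> * of_int k * of_real (\<beta> (block_of L j))) else 0)"

definition block_mat :: "nat list \<Rightarrow> 'a mat \<Rightarrow> nat \<Rightarrow> 'a mat" where
  "block_mat L W s = mat (L ! s) (L ! s) (\<lambda>(i,j). W $$ (bw_start L s + i, bw_start L s + j))"

definition L_admissible :: "nat list \<Rightarrow> real mat \<Rightarrow> bool" where
  "L_admissible L W \<longleftrightarrow>
     (let N = sum_list L in
      W \<in> carrier_mat N N \<and> W\<^sup>T = W \<and>
      (\<forall>i<N. \<forall>j<N. i \<noteq> j \<longrightarrow> W $$ (i,j) \<ge> 0) \<and>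
      (\<forall>i<N. (\<Sum>j<N. W $$ (i,j)) = 0) \<and>
      card {x. eigenvalue W x} = N \<and>
      (\<forall>s<length L. card {x. eigenvalue (block_mat L W s) x} = L ! s))"

definition Gamma_set :: "nat \<Rightarrow> (nat \<Rightarrow> real) set" where
  "Gamma_set S = {\<beta>. \<forall>k::int. k \<noteq> 0 \<longrightarrow> (\<forall>s1<S. \<forall>s2<S. s1 \<noteq> s2 \<longrightarrow>
      exp (- 2 * pi * \<i> * of_int k * of_real (\<beta> s1)) \<noteq>
      exp (- 2 * pi * \<i> * of_int k * of_real (\<beta> s2)))}"

end

theory Submission
  imports Defs "HOL-Complex_Analysis.Conformal_Mappings"
begin


lemma bw_start_0[simp]: "bw_start L 0 = 0" by (simp add: bw_start_def)
lemma bw_start_Cons_Suc[simp]: "bw_start (a#L) (Suc s) = a + bw_start L s" by (simp add: bw_start_def)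

lemma bw_start_Suc: "s < length L \<Longrightarrow> bw_start L (Suc s) = bw_start L s + L!s"
  by (simp add: bw_start_def take_Suc_conv_app_nth)

lemma bw_start_mono: assumes "s \<le> t" shows "bw_start L s \<le> bw_start L t"
proof -
  obtain j where t: "t = s + j" using assms le_Suc_ex by blast
  show ?thesis unfolding bw_start_def t take_add by simp
qed

lemma bw_end_le: assumes "s < length L" shows "bw_start L s + L!s \<le> sum_list L"
proof -
  have "sum_list L = sum_list (take (Suc s) L) + sum_list (drop (Suc s) L)"
    by (metis append_take_drop_id sum_list_append)
  thus ?thesis using bw_start_Suc[OF assms] unfolding bw_start_def by simp
qed

lemma block_exists: "i < sum_list L \<Longrightarrow> \<exists>s<length L. i \<in> bw_block L s"
proof (induction L arbitrary: i)
  case Nil thus ?case by simp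
next
  case (Cons a L)
  show ?case
  proof (cases "i < a")
    case True thus ?thesis by (intro exI[of _ 0]) (auto simp: bw_block_def)
  next
    case False
    have "i - a < sum_list L" using Cons.prems False by simp
    then obtain s where "s < length L" "i - a \<in> bw_block L s" using Cons.IH by blast
    thus ?thesis using False by (intro exI[of _ "Suc s"]) (auto simp: bw_block_def)
  qed
qed

lemma block_unique: assumes "s < length L" "t < length L" "i \<in> bw_block L s" "i \<in> bw_block L t"
  shows "s = t"
proof (rule ccontr)
  assume "s \<noteq> t"
  hence "s < t \<or> t < s" by auto
  thus False
  proof
    assume "s < t"
    hence "bw_start L (Suc s) \<le> bw_start L t" by (intro bw_start_mono) simp
    thus False using assms bw_start_Suc[of s L] by (auto simp: bw_block_def)
  next
    assume "t < s"
    hence "bw_start L (Suc t) \<le> bw_start L s" by (intro bw_start_mono) simp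
    thus False using assms bw_start_Suc[of t L] by (auto simp: bw_block_def)
  qed
qed

lemma block_of_eq: assumes "s < length L" "i \<in> bw_block L s" shows "block_of L i = s"
  unfolding block_of_def using assms block_unique by (intro the_equality) auto

lemma block_of_in: assumes "i < sum_list L"
  shows "block_of L i < length L" "i \<in> bw_block L (block_of L i)"
  using block_exists[OF assms] block_of_eq by auto

lemma bw_block_sub: "s < length L \<Longrightarrow> bw_block L s \<subseteq> {0..<sum_list L}"
  using bw_end_le[of s L] by (auto simp: bw_block_def)



definition ddv :: "int \<Rightarrow> (nat \<Rightarrow> real) \<Rightarrow> nat \<Rightarrow> complex" where
  "ddv k \<beta> t = exp (- 2 * pi * \<i> * of_int k * of_real (\<beta> t))"

definition Pm :: "int \<Rightarrow> (nat \<Rightarrow> real) \<Rightarrow> nat list \<Rightarrow> real mat \<Rightarrow> real \<Rightarrow> complex mat" where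
  "Pm k \<beta> L W \<epsilon> = D_mat k \<beta> L * (1\<^sub>m (sum_list L) + complex_of_real \<epsilon> \<cdot>\<^sub>m map_mat complex_of_real W)"

lemma ddv_nz: "ddv k \<beta> t \<noteq> 0" by (simp add: ddv_def)

lemma sum_delta_left: assumes "i < (n::nat)" shows "(\<Sum>j = 0..<n. (if i = j then x else 0) * f j) = x * (f i :: 'a::comm_ring_1)"
proof -
  have "(\<Sum>j = 0..<n. (if i = j then x else 0) * f j) = (\<Sum>j = 0..<n. if i = j then x * f j else 0)"
    by (intro sum.cong) auto
  also have "\<dots> = x * f i" using assms by (subst sum.delta') auto
  finally show ?thesis .
qed

lemma D_index: "i < sum_list L \<Longrightarrow> j < sum_list L \<Longrightarrow>
   D_mat k \<beta> L $$ (i,j) = (if i = j then ddv k \<beta> (block_of L i) else 0)"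
  by (simp add: D_mat_def ddv_def)

lemma Pm_index: assumes W: "W \<in> carrier_mat (sum_list L) (sum_list L)" and i: "i < sum_list L" and j: "j < sum_list L"
  shows "Pm k \<beta> L W \<epsilon> $$ (i,j) = ddv k \<beta> (block_of L i) * ((if i = j then 1 else 0) + of_real \<epsilon> * of_real (W $$ (i,j)))"
proof -
  let ?N = "sum_list L"
  have "Pm k \<beta> L W \<epsilon> $$ (i,j) = (\<Sum>l = 0..<?N. D_mat k \<beta> L $$ (i,l) * (1\<^sub>m ?N + complex_of_real \<epsilon> \<cdot>\<^sub>m map_mat complex_of_real W) $$ (l,j))"
    using W i j by (simp add: Pm_def scalar_prod_def D_mat_def)
  also have "\<dots> = (\<Sum>l = 0..<?N. (if i = l then ddv k \<beta> (block_of L i) else 0) * ((if l = j then 1 else 0) + of_real \<epsilon> * of_real (W $$ (l,j))))"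
    using W i j by (intro sum.cong refl) (simp add: D_index)
  also have "\<dots> = ddv k \<beta> (block_of L i) * ((if i = j then 1 else 0) + of_real \<epsilon> * of_real (W $$ (i,j)))"
    using i by (rule sum_delta_left)
  finally show ?thesis .
qed

lemma Pm_carrier: "W \<in> carrier_mat (sum_list L) (sum_list L) \<Longrightarrow> Pm k \<beta> L W \<epsilon> \<in> carrier_mat (sum_list L) (sum_list L)"
  unfolding Pm_def by (rule mult_carrier_mat) (auto simp: D_mat_def)

definition Ssum :: "real mat \<Rightarrow> nat \<Rightarrow> complex vec \<Rightarrow> nat \<Rightarrow> complex" where
  "Ssum W n v i = (\<Sum>j = 0..<n. of_real (W $$ (i,j)) * v $ j)"

lemma Pm_mult_vec: assumes W: "W \<in> carrier_mat (sum_list L) (sum_list L)" and v: "v \<in> carrier_vec (sum_list L)"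
  and i: "i < sum_list L"
  shows "(Pm k \<beta> L W \<epsilon> *\<^sub>v v) $ i = ddv k \<beta> (block_of L i) * (v $ i + of_real \<epsilon> * Ssum W (sum_list L) v i)"
proof -
  let ?N = "sum_list L" let ?d = "ddv k \<beta> (block_of L i)"
  have "(Pm k \<beta> L W \<epsilon> *\<^sub>v v) $ i = (\<Sum>j = 0..<?N. Pm k \<beta> L W \<epsilon> $$ (i,j) * v $ j)"
    using Pm_carrier[OF W, of k \<beta> \<epsilon>] v i by (auto simp: scalar_prod_def index_mult_mat_vec intro!: sum.cong)
  also have "\<dots> = (\<Sum>j = 0..<?N. (if i = j then ?d else 0) * v $ j + (?d * of_real \<epsilon>) * (of_real (W $$ (i,j)) * v $ j))"
    using W i by (intro sum.cong refl) (simp add: Pm_index algebra_simps)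
  also have "\<dots> = ?d * v $ i + (?d * of_real \<epsilon>) * Ssum W ?N v i"
    by (simp add: sum.distrib sum_delta_left[OF i] Ssum_def sum_distrib_left)
  finally show ?thesis by (simp add: algebra_simps)
qed



definition gent :: "int \<Rightarrow> (nat \<Rightarrow> real) \<Rightarrow> nat list \<Rightarrow> real mat \<Rightarrow> nat \<Rightarrow> complex \<times> real \<Rightarrow> nat \<Rightarrow> nat \<Rightarrow> complex" where
  "gent k \<beta> L W s z i j =
    (if i \<in> bw_block L s then ddv k \<beta> s * (fst z * (if i = j then 1 else 0) - complex_of_real (W $$ (i,j)))
     else (ddv k \<beta> s * (1 + of_real (snd z) * fst z) - ddv k \<beta> (block_of L i)) * (if i = j then 1 else 0)
          - of_real (snd z) * ddv k \<beta> (block_of L i) * complex_of_real (W $$ (i,j)))"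

definition Gm :: "int \<Rightarrow> (nat \<Rightarrow> real) \<Rightarrow> nat list \<Rightarrow> real mat \<Rightarrow> nat \<Rightarrow> complex \<times> real \<Rightarrow> complex mat" where
  "Gm k \<beta> L W s z = mat (sum_list L) (sum_list L) (\<lambda>(i,j). gent k \<beta> L W s z i j)"

definition Fs :: "int \<Rightarrow> (nat \<Rightarrow> real) \<Rightarrow> nat list \<Rightarrow> real mat \<Rightarrow> nat \<Rightarrow> complex \<times> real \<Rightarrow> complex" where
  "Fs k \<beta> L W s z = det (Gm k \<beta> L W s z)"

lemma Gm_carrier: "Gm k \<beta> L W s z \<in> carrier_mat (sum_list L) (sum_list L)"
  by (simp add: Gm_def)

lemma Fs_expand: "Fs k \<beta> L W s z = (\<Sum>p\<in>{p. p permutes {0..<sum_list L}}. of_int (sign p) * (\<Prod>i = 0..<sum_list L. gent k \<beta> L W s z i (p i)))"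
  unfolding Fs_def det_def Gm_def
  by (auto intro!: sum.cong prod.cong simp: permutes_in_image)

lemma gent_cont: "continuous_on UNIV (\<lambda>z. gent k \<beta> L W s z i j)"
  unfolding gent_def by (cases "i \<in> bw_block L s"; cases "i = j") (auto intro!: continuous_intros)

lemma gent_hol: "(\<lambda>\<nu>. gent k \<beta> L W s (\<nu>, e) i j) holomorphic_on UNIV"
  unfolding gent_def by (cases "i \<in> bw_block L s"; cases "i = j") (auto intro!: holomorphic_intros)

lemma Fs_cont: "continuous_on UNIV (Fs k \<beta> L W s)"
  unfolding Fs_expand[abs_def] by (intro continuous_intros gent_cont)

lemma Fs_hol: "(\<lambda>\<nu>. Fs k \<beta> L W s (\<nu>, e)) holomorphic_on UNIV"
  unfolding Fs_expand by (intro holomorphic_intros gent_hol)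

lemma gent_split: "gent k \<beta> L W s (\<nu>,\<epsilon>) i j =
   (if i = j then (if i \<in> bw_block L s then ddv k \<beta> s * \<nu> else ddv k \<beta> s * (1 + of_real \<epsilon> * \<nu>) - ddv k \<beta> (block_of L i)) else 0)
   + (if i \<in> bw_block L s then - ddv k \<beta> s else - of_real \<epsilon> * ddv k \<beta> (block_of L i)) * of_real (W $$ (i,j))"
  unfolding gent_def by (auto simp: algebra_simps)

lemma Gm_row: assumes v: "v \<in> carrier_vec (sum_list L)" and i: "i < sum_list L"
  shows "(Gm k \<beta> L W s (\<nu>,\<epsilon>) *\<^sub>v v) $ i =
     (if i \<in> bw_block L s then ddv k \<beta> s * \<nu> else ddv k \<beta> s * (1 + of_real \<epsilon> * \<nu>) - ddv k \<beta> (block_of L i)) * v $ i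
   + (if i \<in> bw_block L s then - ddv k \<beta> s else - of_real \<epsilon> * ddv k \<beta> (block_of L i)) * Ssum W (sum_list L) v i"
proof -
  let ?N = "sum_list L"
  let ?X = "(if i \<in> bw_block L s then ddv k \<beta> s * \<nu> else ddv k \<beta> s * (1 + of_real \<epsilon> * \<nu>) - ddv k \<beta> (block_of L i))"
  let ?Y = "(if i \<in> bw_block L s then - ddv k \<beta> s else - of_real \<epsilon> * ddv k \<beta> (block_of L i))"
  have "(Gm k \<beta> L W s (\<nu>,\<epsilon>) *\<^sub>v v) $ i = (\<Sum>j = 0..<?N. gent k \<beta> L W s (\<nu>,\<epsilon>) i j * v $ j)"
    using v i by (auto simp: Gm_def scalar_prod_def intro!: sum.cong)
  also have "\<dots> = (\<Sum>j = 0..<?N. (if i = j then ?X else 0) * v $ j + ?Y * (of_real (W $$ (i,j)) * v $ j))"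
    by (intro sum.cong refl, subst gent_split) (simp only: distrib_right mult.assoc)
  also have "\<dots> = ?X * v $ i + ?Y * Ssum W ?N v i"
    by (simp only: sum.distrib sum_delta_left[OF i] Ssum_def sum_distrib_left)
  finally show ?thesis .
qed

lemma Fs_zero_eig: assumes W: "W \<in> carrier_mat (sum_list L) (sum_list L)" and s: "s < length L"
  and F0: "Fs k \<beta> L W s (\<nu>,\<epsilon>) = 0"
  shows "eigenvalue (Pm k \<beta> L W \<epsilon>) (ddv k \<beta> s * (1 + of_real \<epsilon> * \<nu>))"
proof -
  let ?N = "sum_list L"
  obtain v where v: "v \<in> carrier_vec ?N" "v \<noteq> 0\<^sub>v ?N" and Gv: "Gm k \<beta> L W s (\<nu>,\<epsilon>) *\<^sub>v v = 0\<^sub>v ?N"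
    using F0 det_0_iff_vec_prod_zero[OF Gm_carrier] unfolding Fs_def by blast
  have "Pm k \<beta> L W \<epsilon> *\<^sub>v v = (ddv k \<beta> s * (1 + of_real \<epsilon> * \<nu>)) \<cdot>\<^sub>v v"
  proof (rule eq_vecI)
    show "dim_vec (Pm k \<beta> L W \<epsilon> *\<^sub>v v) = dim_vec ((ddv k \<beta> s * (1 + of_real \<epsilon> * \<nu>)) \<cdot>\<^sub>v v)"
      using Pm_carrier[OF W, of k \<beta> \<epsilon>] v by simp
    fix i assume "i < dim_vec ((ddv k \<beta> s * (1 + of_real \<epsilon> * \<nu>)) \<cdot>\<^sub>v v)"
    hence i: "i < ?N" using v by simp
    have g: "(Gm k \<beta> L W s (\<nu>,\<epsilon>) *\<^sub>v v) $ i = 0" using Gv i by simp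
    show "(Pm k \<beta> L W \<epsilon> *\<^sub>v v) $ i = ((ddv k \<beta> s * (1 + of_real \<epsilon> * \<nu>)) \<cdot>\<^sub>v v) $ i"
    proof (cases "i \<in> bw_block L s")
      case True
      hence b: "block_of L i = s" using block_of_eq s by blast
      from g True have "ddv k \<beta> s * (\<nu> * v $ i - Ssum W ?N v i) = 0"
        unfolding Gm_row[OF v(1) i] by (simp add: algebra_simps)
      hence "Ssum W ?N v i = \<nu> * v $ i" using ddv_nz by simp
      thus ?thesis unfolding Pm_mult_vec[OF W v(1) i] using i v b by (simp add: algebra_simps)
    next
      case False
      from g False show ?thesis unfolding Pm_mult_vec[OF W v(1) i] Gm_row[OF v(1) i] using i v
        by (simp add: algebra_simps)
    qed
  qed
  thus ?thesis unfolding eigenvalue_def eigenvector_def using v Pm_carrier[OF W, of k \<beta> \<epsilon>] by auto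
qed



lemma eig_finite_card: assumes A: "(A :: 'a :: field mat) \<in> carrier_mat n n"
  shows "finite {x. eigenvalue A x}" "card {x. eigenvalue A x} \<le> n"
proof -
  have d: "degree (char_poly A) = n" "coeff (char_poly A) n = 1" using degree_monic_char_poly[OF A] by auto
  hence nz: "char_poly A \<noteq> 0" by auto
  have eq: "{x. eigenvalue A x} = {x. poly (char_poly A) x = 0}"
    using eigenvalue_root_char_poly[OF A] by auto
  show "finite {x. eigenvalue A x}" unfolding eq by (rule poly_roots_finite[OF nz])
  show "card {x. eigenvalue A x} \<le> n" unfolding eq using card_poly_roots_bound[OF nz] d by simp
qed

lemma Ssum_block: assumes s: "s < length L"
  and z: "\<And>j. j < sum_list L \<Longrightarrow> j \<notin> bw_block L s \<Longrightarrow> v $ j = 0"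
  shows "Ssum W (sum_list L) v i = (\<Sum>j = 0..<L!s. of_real (W $$ (i, bw_start L s + j)) * v $ (bw_start L s + j))"
proof -
  let ?a = "bw_start L s"
  have "Ssum W (sum_list L) v i = (\<Sum>j\<in>bw_block L s. of_real (W $$ (i,j)) * v $ j)"
    unfolding Ssum_def using bw_block_sub[OF s] z
    by (intro sum.mono_neutral_right) auto
  also have "\<dots> = (\<Sum>j\<in>{0+?a..<L!s+?a}. of_real (W $$ (i,j)) * v $ j)"
    unfolding bw_block_def by (simp add: add.commute)
  also have "\<dots> = (\<Sum>j = 0..<L!s. of_real (W $$ (i, ?a + j)) * v $ (?a + j))"
    by (subst sum.shift_bounds_nat_ivl) (simp add: add.commute)
  finally show ?thesis .
qed

lemma nonzero_vec_ex: "u \<in> carrier_vec n \<Longrightarrow> u \<noteq> 0\<^sub>v n \<Longrightarrow> \<exists>j<n. u $ j \<noteq> 0"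
  by (metis carrier_vecD eq_vecI index_zero_vec(1) index_zero_vec(2))

lemma Fs_root: assumes W: "W \<in> carrier_mat (sum_list L) (sum_list L)" and s: "s < length L"
  and ev: "eigenvalue (block_mat L W s) lam"
  shows "Fs k \<beta> L W s (of_real lam, 0) = 0"
proof -
  let ?N = "sum_list L" let ?a = "bw_start L s" let ?n = "L!s"
  obtain u where u: "u \<in> carrier_vec ?n" "u \<noteq> 0\<^sub>v ?n" and Wu: "block_mat L W s *\<^sub>v u = lam \<cdot>\<^sub>v u"
    using ev unfolding eigenvalue_def eigenvector_def by (auto simp: block_mat_def)
  define v where "v = vec ?N (\<lambda>i. if i \<in> bw_block L s then complex_of_real (u $ (i - ?a)) else 0)"
  have vc: "v \<in> carrier_vec ?N" by (simp add: v_def)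
  have vz: "v $ j = 0" if "j < ?N" "j \<notin> bw_block L s" for j using that by (simp add: v_def)
  have va: "v $ (?a + j) = of_real (u $ j)" if "j < ?n" for j
    using that bw_end_le[OF s] by (simp add: v_def bw_block_def)
  obtain j where j: "j < ?n" "u $ j \<noteq> 0" using nonzero_vec_ex[OF u] by blast
  have "v \<noteq> 0\<^sub>v ?N"
  proof
    assume "v = 0\<^sub>v ?N"
    hence "v $ (?a + j) = 0" using j bw_end_le[OF s] by simp
    thus False using va[OF j(1)] j(2) by simp
  qed
  moreover have "Gm k \<beta> L W s (of_real lam, 0) *\<^sub>v v = 0\<^sub>v ?N"
  proof (rule eq_vecI)
    show "dim_vec (Gm k \<beta> L W s (of_real lam, 0) *\<^sub>v v) = dim_vec (0\<^sub>v ?N)" by (simp add: Gm_def)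
    fix i assume "i < dim_vec (0\<^sub>v ?N :: complex vec)"
    hence i: "i < ?N" by simp
    show "(Gm k \<beta> L W s (of_real lam, 0) *\<^sub>v v) $ i = 0\<^sub>v ?N $ i"
    proof (cases "i \<in> bw_block L s")
      case True
      define i' where "i' = i - ?a"
      have i': "i' < ?n" "i = ?a + i'" using True by (auto simp: bw_block_def i'_def)
      have "Ssum W ?N v i = (\<Sum>j = 0..<?n. of_real (W $$ (i, ?a + j)) * v $ (?a + j))"
        by (rule Ssum_block[OF s vz])
      also have "\<dots> = (\<Sum>j = 0..<?n. of_real (W $$ (i, ?a + j)) * of_real (u $ j))"
        by (intro sum.cong refl) (simp add: va)
      also have "\<dots> = of_real ((block_mat L W s *\<^sub>v u) $ i')"
        using i' u by (simp add: block_mat_def scalar_prod_def)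
      also have "\<dots> = of_real lam * v $ i" using Wu i' u va by simp
      finally show ?thesis unfolding Gm_row[OF vc i] using True i by (simp add: algebra_simps)
    next
      case False
      thus ?thesis unfolding Gm_row[OF vc i] using vz[OF i False] i by simp
    qed
  qed
  ultimately have "det (Gm k \<beta> L W s (of_real lam, 0)) = 0"
    using det_0_iff_vec_prod_zero[OF Gm_carrier] vc by blast
  thus ?thesis by (simp add: Fs_def)
qed

lemma Fs_zero_Z: assumes W: "W \<in> carrier_mat (sum_list L) (sum_list L)" and s: "s < length L"
  and dist: "\<And>t. t < length L \<Longrightarrow> t \<noteq> s \<Longrightarrow> ddv k \<beta> t \<noteq> ddv k \<beta> s"
  and F0: "Fs k \<beta> L W s (\<nu>, 0) = 0"
  shows "eigenvalue (map_mat complex_of_real (block_mat L W s)) \<nu>"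
proof -
  let ?N = "sum_list L" let ?a = "bw_start L s" let ?n = "L!s"
  obtain v where v: "v \<in> carrier_vec ?N" "v \<noteq> 0\<^sub>v ?N" and Gv: "Gm k \<beta> L W s (\<nu>,0) *\<^sub>v v = 0\<^sub>v ?N"
    using F0 det_0_iff_vec_prod_zero[OF Gm_carrier] unfolding Fs_def by blast
  have g: "(Gm k \<beta> L W s (\<nu>,0) *\<^sub>v v) $ i = 0" if "i < ?N" for i using Gv that by simp
  have vz: "v $ i = 0" if i: "i < ?N" and nb: "i \<notin> bw_block L s" for i
  proof -
    have bt: "block_of L i < length L" "i \<in> bw_block L (block_of L i)" using block_of_in[OF i] by auto
    hence "block_of L i \<noteq> s" using nb by auto
    hence "ddv k \<beta> (block_of L i) \<noteq> ddv k \<beta> s" using dist bt by auto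
    moreover have "(ddv k \<beta> s - ddv k \<beta> (block_of L i)) * v $ i = 0"
      using g[OF i] unfolding Gm_row[OF v(1) i] using nb by simp
    ultimately show ?thesis by simp
  qed
  define u where "u = vec ?n (\<lambda>j. v $ (?a + j))"
  have uc: "u \<in> carrier_vec ?n" by (simp add: u_def)
  obtain i where i: "i < ?N" "v $ i \<noteq> 0" using nonzero_vec_ex[OF v] by blast
  hence ib: "i \<in> bw_block L s" using vz by blast
  have "u $ (i - ?a) \<noteq> 0" using ib i by (auto simp: u_def bw_block_def)
  hence un: "u \<noteq> 0\<^sub>v ?n" using ib by (auto simp: bw_block_def)
  have "map_mat complex_of_real (block_mat L W s) *\<^sub>v u = \<nu> \<cdot>\<^sub>v u"
  proof (rule eq_vecI)
    show "dim_vec (map_mat complex_of_real (block_mat L W s) *\<^sub>v u) = dim_vec (\<nu> \<cdot>\<^sub>v u)"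
      by (simp add: block_mat_def u_def)
    fix j assume "j < dim_vec (\<nu> \<cdot>\<^sub>v u)"
    hence j: "j < ?n" by (simp add: u_def)
    have ij: "?a + j < ?N" "?a + j \<in> bw_block L s" using j bw_end_le[OF s] by (auto simp: bw_block_def)
    have "ddv k \<beta> s * (\<nu> * v $ (?a + j)) - ddv k \<beta> s * Ssum W ?N v (?a + j) = 0"
      using g[OF ij(1)] unfolding Gm_row[OF v(1) ij(1)] using ij(2) by (simp add: algebra_simps)
    hence "ddv k \<beta> s * (\<nu> * v $ (?a + j) - Ssum W ?N v (?a + j)) = 0" by (simp add: algebra_simps)
    hence e: "Ssum W ?N v (?a + j) = \<nu> * v $ (?a + j)" using ddv_nz by simp
    have "(map_mat complex_of_real (block_mat L W s) *\<^sub>v u) $ j = (\<Sum>l = 0..<?n. of_real (W $$ (?a + j, ?a + l)) * v $ (?a + l))"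
      using j by (auto simp: block_mat_def scalar_prod_def u_def intro!: sum.cong)
    also have "\<dots> = Ssum W ?N v (?a + j)" using Ssum_block[OF s vz] by simp
    finally show "(map_mat complex_of_real (block_mat L W s) *\<^sub>v u) $ j = (\<nu> \<cdot>\<^sub>v u) $ j"
      using e j by (simp add: u_def)
  qed
  thus ?thesis unfolding eigenvalue_def eigenvector_def using uc un by (auto simp: block_mat_def)
qed



lemma root_persist:
  fixes F :: "complex \<times> real \<Rightarrow> complex" and z0 :: complex and r :: real
  assumes cont: "continuous_on UNIV F"
  and hol: "\<And>e. (\<lambda>z. F (z,e)) holomorphic_on UNIV"
  and F0: "F (z0, 0) = 0" and r: "r > 0"
  and nz: "\<And>z. dist z z0 = r \<Longrightarrow> F (z,0) \<noteq> 0"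
  shows "\<exists>\<delta>>0. \<forall>e. \<bar>e\<bar> < \<delta> \<longrightarrow> (\<exists>z. dist z z0 < r \<and> F (z,e) = 0)"
proof -
  have "continuous_on (sphere z0 r) (\<lambda>z. norm (F (z,0)))"
    by (intro continuous_intros continuous_on_compose2[OF cont]) auto
  moreover have "sphere z0 r \<noteq> {}" using r by simp
  ultimately obtain zm where zm: "zm \<in> sphere z0 r" and zmin: "\<And>y. y \<in> sphere z0 r \<Longrightarrow> norm (F (zm,0)) \<le> norm (F (y,0))"
    using continuous_attains_inf[of "sphere z0 r" "\<lambda>z. norm (F (z,0))"] by auto
  define m where "m = norm (F (zm,0))"
  have m: "m > 0" using nz zm by (auto simp: m_def dist_commute)
  define S where "S = cball z0 r \<times> cball (0::real) 1"
  have "compact S" unfolding S_def by (intro compact_Times) auto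
  hence "uniformly_continuous_on S F"
    by (intro compact_uniformly_continuous continuous_on_subset[OF cont]) auto
  then obtain d where d: "d > 0" and dd: "\<And>x x'. x \<in> S \<Longrightarrow> x' \<in> S \<Longrightarrow> dist x' x < d \<Longrightarrow> dist (F x') (F x) < m/2"
    unfolding uniformly_continuous_on_def using m by (metis half_gt_zero)
  show ?thesis
  proof (intro exI[of _ "min d 1"] conjI allI impI)
    show "0 < min d 1" using d by simp
    fix e :: real assume e: "\<bar>e\<bar> < min d 1"
    have close: "dist (F (z,e)) (F (z,0)) < m/2" if "z \<in> cball z0 r" for z
    proof -
      have "dist (z,e) (z,0) = \<bar>e\<bar>" by (simp add: dist_Pair_Pair dist_real_def)
      thus ?thesis using dd[of "(z,0)" "(z,e)"] that e unfolding S_def by auto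
    qed
    show "\<exists>z. dist z z0 < r \<and> F (z,e) = 0"
    proof (rule ccontr)
      assume no: "\<not> ?thesis"
      have sph: "norm (F (z,e)) \<ge> m/2" if "z \<in> sphere z0 r" for z
      proof -
        have "m \<le> norm (F (z,0))" using zmin[OF that] m_def by simp
        moreover have "dist (F (z,e)) (F (z,0)) < m/2" using close that by auto
        moreover have "norm (F (z,0)) \<le> norm (F (z,e)) + norm (F (z,0) - F (z,e))" by (rule norm_triangle_sub)
        ultimately show ?thesis by (simp add: dist_norm norm_minus_commute)
      qed
      have nzc: "F (z,e) \<noteq> 0" if "z \<in> cball z0 r" for z
      proof (cases "dist z z0 < r")
        case True thus ?thesis using no by auto
      next
        case False
        hence "z \<in> sphere z0 r" using that by (auto simp: dist_commute)
        thus ?thesis using sph[of z] m by auto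
      qed
      have "norm (inverse (F (z0,e))) \<le> 2/m"
      proof (rule maximum_modulus_frontier[of "\<lambda>z. inverse (F (z,e))" "cball z0 r"])
        show "(\<lambda>z. inverse (F (z,e))) holomorphic_on interior (cball z0 r)"
          using nzc by (intro holomorphic_intros holomorphic_on_subset[OF hol]) auto
        show "continuous_on (closure (cball z0 r)) (\<lambda>z. inverse (F (z,e)))"
          using nzc by (intro continuous_intros continuous_on_compose2[OF cont]) auto
        show "bounded (cball z0 r)" by simp
        show "z0 \<in> cball z0 r" using r by simp
        fix z assume "z \<in> frontier (cball z0 r)"
        hence "z \<in> sphere z0 r" using r by simp
        hence "norm (F (z,e)) \<ge> m/2" by (rule sph)
        hence "inverse (norm (F (z,e))) \<le> inverse (m/2)" using m by (intro le_imp_inverse_le) simp_all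
        thus "norm (inverse (F (z,e))) \<le> 2/m" by (simp add: norm_inverse)
      qed
      hence "inverse (norm (F (z0,e))) \<le> inverse (m/2)" by (simp add: norm_inverse)
      moreover have "norm (F (z0,e)) > 0" using nzc[of z0] r by simp
      ultimately have "norm (F (z0,e)) \<ge> m/2" by (rule inverse_le_imp_le)
      moreover have "dist (F (z0,e)) (F (z0,0)) < m/2" using close r by auto
      ultimately show False using F0 by (simp add: dist_norm)
    qed
  qed
qed


lemma ddv_norm: "norm (ddv k \<beta> t) = 1"
  by (simp add: ddv_def norm_exp_eq_Re)

lemma ev_right_lt: "(c::real) > 0 \<Longrightarrow> eventually (\<lambda>x. x < c) (at_right 0)"
  by (auto simp: eventually_at_right_field intro!: exI[of _ c])

lemma main_ev:
  fixes L :: "nat list" and W :: "real mat"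
  assumes W: "W \<in> carrier_mat (sum_list L) (sum_list L)"
  and blk: "\<And>s. s < length L \<Longrightarrow> card {x. eigenvalue (block_mat L W s) x} = L!s"
  and dist: "\<And>s t. s < length L \<Longrightarrow> t < length L \<Longrightarrow> t \<noteq> s \<Longrightarrow> ddv k \<beta> t \<noteq> ddv k \<beta> s"
  shows "eventually (\<lambda>\<epsilon>. card {\<mu>. eigenvalue (Pm k \<beta> L W \<epsilon>) \<mu>} = sum_list L) (at_right 0)"
proof -
  let ?N = "sum_list L" let ?S = "length L"
  define Lam where "Lam s = {x. eigenvalue (block_mat L W s) x}" for s
  define Z where "Z s = {x. eigenvalue (map_mat complex_of_real (block_mat L W s)) x}" for s
  have bc: "block_mat L W s \<in> carrier_mat (L!s) (L!s)" for s by (simp add: block_mat_def)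
  have finLam: "finite (Lam s)" for s unfolding Lam_def by (rule eig_finite_card(1)[OF bc])
  have finZ: "finite (Z s)" for s unfolding Z_def
    by (rule eig_finite_card(1)[of _ "L!s"]) (simp add: block_mat_def)
  define ZZ where "ZZ = (\<Union>s<?S. Z s)"
  have finZZ: "finite ZZ" unfolding ZZ_def using finZ by auto
  have LamZ: "complex_of_real lam \<in> ZZ" if "s < ?S" "lam \<in> Lam s" for s lam
  proof -
    have "Fs k \<beta> L W s (of_real lam, 0) = 0" using Fs_root[OF W that(1)] that(2) by (simp add: Lam_def)
    hence "complex_of_real lam \<in> Z s" using Fs_zero_Z[OF W that(1) dist] that(1) by (simp add: Z_def)
    thus ?thesis using that unfolding ZZ_def by auto
  qed
  have FsZ: "z \<in> ZZ" if "s < ?S" "Fs k \<beta> L W s (z, 0) = 0" for s z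
    using Fs_zero_Z[OF W that(1) dist that(2)] that(1) unfolding ZZ_def Z_def by auto
  have "eventually (\<lambda>r. \<forall>p\<in>ZZ \<times> ZZ. fst p \<noteq> snd p \<longrightarrow> 2 * r < dist (fst p) (snd p)) (at_right 0)"
  proof (rule eventually_ball_finite)
    show "finite (ZZ \<times> ZZ)" using finZZ by simp
    show "\<forall>p\<in>ZZ \<times> ZZ. \<forall>\<^sub>F r in at_right 0. fst p \<noteq> snd p \<longrightarrow> 2 * r < dist (fst p) (snd p)"
    proof
      fix p assume "p \<in> ZZ \<times> ZZ"
      show "\<forall>\<^sub>F r in at_right 0. fst p \<noteq> snd p \<longrightarrow> 2 * r < dist (fst p) (snd p)"
      proof (cases "fst p = snd p")
        case True thus ?thesis by simp
      next
        case False
        hence "dist (fst p) (snd p) / 2 > 0" by simp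
        from ev_right_lt[OF this] show ?thesis by eventually_elim auto
      qed
    qed
  qed
  then obtain b where b: "b > 0" "\<And>y. y > 0 \<Longrightarrow> y < b \<Longrightarrow> \<forall>p\<in>ZZ \<times> ZZ. fst p \<noteq> snd p \<longrightarrow> 2 * y < dist (fst p) (snd p)"
    unfolding eventually_at_right_field by auto
  define r where "r = b / 2"
  have r: "r > 0" using b by (simp add: r_def)
  have sep: "2 * r < dist z w" if "z \<in> ZZ" "w \<in> ZZ" "z \<noteq> w" for z w
    using b(2)[of r] r that by (auto simp: r_def)
  define I where "I = Sigma {..<?S} Lam"
  have finI: "finite I" unfolding I_def using finLam by auto
  have ev1: "eventually (\<lambda>\<epsilon>. \<forall>p\<in>I. \<exists>\<nu>. dist \<nu> (of_real (snd p)) < r \<and> Fs k \<beta> L W (fst p) (\<nu>, \<epsilon>) = 0) (at_right 0)"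
  proof (rule eventually_ball_finite[OF finI], rule ballI)
    fix p assume p: "p \<in> I"
    then obtain s lam where p': "p = (s, lam)" "s < ?S" "lam \<in> Lam s" unfolding I_def by auto
    have nz: "Fs k \<beta> L W s (z, 0) \<noteq> 0" if "dist z (of_real lam) = r" for z
    proof
      assume "Fs k \<beta> L W s (z, 0) = 0"
      hence "z \<in> ZZ" using FsZ p' by blast
      moreover have "z \<noteq> of_real lam" using that r by auto
      ultimately have "2 * r < dist z (of_real lam)" using sep LamZ p' by blast
      thus False using that r by simp
    qed
    have F0: "Fs k \<beta> L W s (of_real lam, 0) = 0" using Fs_root[OF W p'(2)] p'(3) by (simp add: Lam_def)
    obtain \<delta> where \<delta>: "\<delta> > 0" "\<And>e. \<bar>e\<bar> < \<delta> \<Longrightarrow> \<exists>z. dist z (of_real lam) < r \<and> Fs k \<beta> L W s (z, e) = 0"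
      using root_persist[of "Fs k \<beta> L W s", OF Fs_cont Fs_hol F0 r nz] by blast
    show "\<forall>\<^sub>F \<epsilon> in at_right 0. \<exists>\<nu>. dist \<nu> (of_real (snd p)) < r \<and> Fs k \<beta> L W (fst p) (\<nu>, \<epsilon>) = 0"
      unfolding eventually_at_right_field using \<delta> p' by (intro exI[of _ \<delta>]) auto
  qed
  have ev2: "eventually (\<lambda>\<epsilon>. \<forall>p\<in>I. \<forall>q\<in>I. fst p \<noteq> fst q \<longrightarrow> (\<forall>\<nu> \<nu>'. dist \<nu> (of_real (snd p)) < r \<longrightarrow> dist \<nu>' (of_real (snd q)) < r \<longrightarrow>
      ddv k \<beta> (fst p) * (1 + of_real \<epsilon> * \<nu>) \<noteq> ddv k \<beta> (fst q) * (1 + of_real \<epsilon> * \<nu>'))) (at_right 0)"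
  proof (rule eventually_ball_finite[OF finI], rule ballI, rule eventually_ball_finite[OF finI], rule ballI)
    fix p q assume p: "p \<in> I" and q: "q \<in> I"
    obtain s lam where p': "p = (s, lam)" "s < ?S" using p unfolding I_def by auto
    obtain t lam' where q': "q = (t, lam')" "t < ?S" using q unfolding I_def by auto
    show "\<forall>\<^sub>F \<epsilon> in at_right 0. fst p \<noteq> fst q \<longrightarrow> (\<forall>\<nu> \<nu>'. dist \<nu> (of_real (snd p)) < r \<longrightarrow> dist \<nu>' (of_real (snd q)) < r \<longrightarrow>
      ddv k \<beta> (fst p) * (1 + of_real \<epsilon> * \<nu>) \<noteq> ddv k \<beta> (fst q) * (1 + of_real \<epsilon> * \<nu>'))"
    proof (cases "s = t")
      case True thus ?thesis using p' q' by simp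
    next
      case False
      define c where "c = norm (ddv k \<beta> s - ddv k \<beta> t)"
      have c: "c > 0" using dist[OF q'(2) p'(2)] False by (auto simp: c_def)
      define R where "R = norm lam + norm lam' + 2 * r + 1"
      have R: "R > 0" using r by (simp add: R_def add_pos_nonneg)
      have "c / R > 0" using c R by simp
      from eventually_conj[OF ev_right_lt[OF this] eventually_at_right_less]
      show ?thesis
      proof eventually_elim
        case (elim \<epsilon>)
        show ?case
        proof (intro impI allI notI)
          fix \<nu> \<nu>' assume d1: "dist \<nu> (of_real (snd p)) < r" and d2: "dist \<nu>' (of_real (snd q)) < r"
            and eq: "ddv k \<beta> (fst p) * (1 + of_real \<epsilon> * \<nu>) = ddv k \<beta> (fst q) * (1 + of_real \<epsilon> * \<nu>')"
          have n1: "norm \<nu> \<le> norm lam + r"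
          proof -
            have "norm \<nu> \<le> norm (complex_of_real lam) + norm (\<nu> - of_real lam)" by (rule norm_triangle_sub)
            thus ?thesis using d1 p' by (simp add: dist_norm)
          qed
          have n2: "norm \<nu>' \<le> norm lam' + r"
          proof -
            have "norm \<nu>' \<le> norm (complex_of_real lam') + norm (\<nu>' - of_real lam')" by (rule norm_triangle_sub)
            thus ?thesis using d2 q' by (simp add: dist_norm)
          qed
          have "ddv k \<beta> s - ddv k \<beta> t = of_real \<epsilon> * (ddv k \<beta> t * \<nu>' - ddv k \<beta> s * \<nu>)"
            using eq p' q' by (simp add: algebra_simps)
          hence "c = \<epsilon> * norm (ddv k \<beta> t * \<nu>' - ddv k \<beta> s * \<nu>)"
            using elim by (simp add: c_def norm_mult)
          also have "\<dots> \<le> \<epsilon> * (norm \<nu>' + norm \<nu>)"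
          proof -
            have "norm (ddv k \<beta> t * \<nu>' - ddv k \<beta> s * \<nu>) \<le> norm (ddv k \<beta> t * \<nu>') + norm (ddv k \<beta> s * \<nu>)"
              by (rule norm_triangle_ineq4)
            thus ?thesis using elim by (intro mult_left_mono) (auto simp: norm_mult ddv_norm)
          qed
          also have "\<dots> \<le> \<epsilon> * R" using n1 n2 elim by (intro mult_left_mono) (auto simp: R_def)
          also have "\<dots> < c" using elim R by (simp add: pos_less_divide_eq mult.commute)
          finally show False by simp
        qed
      qed
    qed
  qed
  have cardI: "card I = ?N"
  proof -
    have "card I = (\<Sum>s<?S. card (Lam s))" unfolding I_def using finLam by simp
    also have "\<dots> = (\<Sum>s<?S. L!s)" using blk by (simp add: Lam_def)
    also have "\<dots> = ?N" by (simp add: sum_list_sum_nth atLeast0LessThan)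
    finally show ?thesis .
  qed
  from eventually_conj[OF eventually_conj[OF ev1 ev2] eventually_at_right_less]
  show ?thesis
  proof eventually_elim
    case (elim \<epsilon>)
    hence e: "\<epsilon> > 0" by simp
    from elim have "\<forall>p\<in>I. \<exists>\<nu>. dist \<nu> (of_real (snd p)) < r \<and> Fs k \<beta> L W (fst p) (\<nu>, \<epsilon>) = 0" by blast
    then obtain f where f: "\<And>p. p \<in> I \<Longrightarrow> dist (f p) (of_real (snd p)) < r \<and> Fs k \<beta> L W (fst p) (f p, \<epsilon>) = 0"
      by metis
    define g where "g p = ddv k \<beta> (fst p) * (1 + of_real \<epsilon> * f p)" for p
    define E where "E = {\<mu>. eigenvalue (Pm k \<beta> L W \<epsilon>) \<mu>}"
    have PC: "Pm k \<beta> L W \<epsilon> \<in> carrier_mat ?N ?N" by (rule Pm_carrier[OF W])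
    have finE: "finite E" "card E \<le> ?N" unfolding E_def using eig_finite_card[OF PC] by auto
    have gE: "g ` I \<subseteq> E"
    proof
      fix \<mu> assume "\<mu> \<in> g ` I"
      then obtain p where p: "p \<in> I" "\<mu> = g p" by auto
      have "fst p < ?S" using p unfolding I_def by auto
      thus "\<mu> \<in> E" using Fs_zero_eig[OF W _ conjunct2[OF f[OF p(1)]]] p unfolding E_def g_def by auto
    qed
    have inj: "inj_on g I"
    proof (rule inj_onI)
      fix p q assume p: "p \<in> I" and q: "q \<in> I" and gq: "g p = g q"
      obtain s lam where p': "p = (s, lam)" "s < ?S" "lam \<in> Lam s" using p unfolding I_def by auto
      obtain t lam' where q': "q = (t, lam')" "t < ?S" "lam' \<in> Lam t" using q unfolding I_def by auto
      have st: "s = t"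
      proof (rule ccontr)
        assume "s \<noteq> t"
        thus False using elim p q f[OF p] f[OF q] gq p' q' unfolding g_def by fastforce
      qed
      have "1 + of_real \<epsilon> * f p = 1 + of_real \<epsilon> * f q" using gq st p' q' ddv_nz unfolding g_def by simp
      hence fpq: "f p = f q" using e by simp
      show "p = q"
      proof (rule ccontr)
        assume "p \<noteq> q"
        hence "lam \<noteq> lam'" using p' q' st by auto
        hence ne: "complex_of_real lam \<noteq> of_real lam'" by simp
        have "2 * r < dist (complex_of_real lam) (of_real lam')" using sep[OF LamZ[OF p'(2,3)] LamZ[OF q'(2,3)] ne] .
        moreover have "dist (complex_of_real lam) (of_real lam') \<le> dist (complex_of_real lam) (f p) + dist (f p) (of_real lam')"
          by (rule dist_triangle)
        moreover have "dist (f p) (of_real lam) < r" "dist (f q) (of_real lam') < r" using f[OF p] f[OF q] p' q' by auto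
        ultimately show False using fpq by (simp add: dist_commute)
      qed
    qed
    have "card I \<le> card E" using card_inj_on_le[OF inj gE finE(1)] .
    thus ?case using finE(2) cardI unfolding E_def by simp
  qed
qed



theorem theorem3p3:
  fixes N :: nat and L :: "nat list" and Wdot :: "real mat" and \<beta> :: "nat \<Rightarrow> real" and k :: int
  assumes "N \<ge> 1" and "1 \<le> length L" and "length L \<le> N"
    and "bw_vector L N"
    and "L_admissible L Wdot"
    and "\<beta> \<in> Gamma_set (length L)"
  shows "\<exists>\<gamma>>0. \<forall>\<epsilon>::real. 0 < \<epsilon> \<and> \<epsilon> < \<gamma> \<longrightarrow>
           card {\<mu>::complex. eigenvalue
              (D_mat k \<beta> L * (1\<^sub>m N + complex_of_real \<epsilon> \<cdot>\<^sub>m map_mat complex_of_real Wdot)) \<mu>} = N"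
proof -
  have NL: "sum_list L = N" using assms(4) by (simp add: bw_vector_def)
  have W: "Wdot \<in> carrier_mat N N" and cardW: "card {x. eigenvalue Wdot x} = N"
    and blk: "\<And>s. s < length L \<Longrightarrow> card {x. eigenvalue (block_mat L Wdot s) x} = L!s"
    using assms(5) NL by (auto simp: L_admissible_def Let_def)
  have ev: "eventually (\<lambda>\<epsilon>. card {\<mu>. eigenvalue (D_mat k \<beta> L * (1\<^sub>m N + complex_of_real \<epsilon> \<cdot>\<^sub>m map_mat complex_of_real Wdot)) \<mu>} = N) (at_right 0)"
  proof (cases "k = 0")
    case False
    have dist: "ddv k \<beta> t \<noteq> ddv k \<beta> s" if "s < length L" "t < length L" "t \<noteq> s" for s t
      using assms(6) False that unfolding Gamma_set_def ddv_def by blast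
    from main_ev[where L=L and W=Wdot and k=k and \<beta>=\<beta>, OF _ blk dist] W NL show ?thesis by (simp add: Pm_def)
  next
    case True
    have W': "Wdot \<in> carrier_mat (sum_list [N]) (sum_list [N])" using W by simp
    have bm: "block_mat [N] Wdot 0 = Wdot"
      using W by (intro eq_matI) (auto simp: block_mat_def bw_start_def)
    have blk': "card {x. eigenvalue (block_mat [N] Wdot s) x} = [N]!s" if "s < length [N]" for s
      using that bm cardW by simp
    have D: "D_mat k \<beta> [N] = D_mat k \<beta> L" unfolding D_mat_def True NL by (intro eq_matI) auto
    from main_ev[where L="[N]" and W=Wdot and k=k and \<beta>=\<beta>, OF W' blk'] show ?thesis by (simp add: Pm_def D)
  qed
  then obtain b where "b > 0" "\<And>y. y > 0 \<Longrightarrow> y < b \<Longrightarrow> card {\<mu>. eigenvalue (D_mat k \<beta> L * (1\<^sub>m N + complex_of_real y \<cdot>\<^sub>m map_mat complex_of_real Wdot)) \<mu>} = N"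
    unfolding eventually_at_right_field by auto
  thus ?thesis by blast
qed

end
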